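(* Let $A\subseteq\mathbb{N}$ and let $f\colon\deg_e(A)\to\mathcal{P}(\mathbb{N})$ be uniformly $e$-invariant and not constant. Then there is $B\in\deg_e(A)$ such that $f(A\oplus B)\neq f(A\oplus\varnothing)$ or $f(A\oplus B)\neq f(\varnothing\oplus B)$.
   Context: $X\oplus Y=\{2n:n\in X\}\cup\{2n+1:n\in Y\}$. Enumeration reducibility: for $A,B\subseteq\mathbb{N}$, $A\le_e B$ if $A=\Gamma(B):=\{n:\exists D\subseteq B,\ \langle n,D\rangle\in\Gamma\}$ for some c.e. set $\Gamma$ of pairs $\langle n,D\rangle$ with $D$ finite (canonical index); $(\Gamma_i)_{i\in\mathbb{N}}$ is the standard computable numbering of these enumeration operators. $A\equiv_e B$ iff $A\le_e B\le_e A$; $\deg_e(A)=\{B: B\equiv_e A\}$. Let $\mathcal{X}\subseteq\mathcal{P}(\mathbb{N})$ be closed under $\equiv_e$. A function $f\colon\mathcal{X}\to\mathcal{P}(\mathbb{N})$ is $e$-invariant if $A\equiv_e B$ implies $f(A)\equiv_e f(B)$. Write $A\equiv_e B$ via $\langle i,j\rangle$ if $\Gamma_i(A)=B$ and $\Gamma_j(B)=A$ (with $\langle\cdot,\cdot\rangle$ a fixed computable pairing bijection). A function $u\colon\mathbb{N}\to\mathbb{N}$ is a uniformity function for $f$ if for all $A,B\in\mathcal{X}$ and all $i,j$, whenever $A\equiv_e B$ via $\langle i,j\rangle$ then $f(A)\equiv_e f(B)$ via $u(\langle i,j\rangle)$. $f$ is uniformly $e$-invariant if it has some uniformity function. "Not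 constant" means there are $C,D\in\deg_e(A)$ with $f(C)\neq f(D)$. *)

theory Defs
  imports Main "HOL-Library.Nat_Bijection"
begin

datatype recf = Z | S | Proj nat | Comp recf "recf list" | Prim recf recf | Mu recf

text \<open>Arguments are lists of naturals; a missing argument is read as 0.\<close>

definition arg :: "nat list \<Rightarrow> nat \<Rightarrow> nat" where
  "arg xs i = (if i < length xs then xs ! i else 0)"

inductive eval :: "recf \<Rightarrow> nat list \<Rightarrow> nat \<Rightarrow> bool" where
  eval_Z: "eval Z xs 0"
| eval_S: "eval S xs (Suc (arg xs 0))"
| eval_Proj: "eval (Proj i) xs (arg xs i)"
| eval_Comp: "list_all2 (\<lambda>g y. eval g xs y) gs ys \<Longrightarrow> eval f ys z \<Longrightarrow> eval (Comp f gs) xs z"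
| eval_Prim0: "eval f xs z \<Longrightarrow> eval (Prim f g) (0 # xs) z"
| eval_PrimS: "eval (Prim f g) (n # xs) y \<Longrightarrow> eval g (n # y # xs) z \<Longrightarrow> eval (Prim f g) (Suc n # xs) z"
| eval_Mu: "eval f (n # xs) 0 \<Longrightarrow> (\<forall>m<n. \<exists>y. y > 0 \<and> eval f (m # xs) y) \<Longrightarrow> eval (Mu f) xs n"

fun enc :: "recf \<Rightarrow> nat" where
  "enc Z = prod_encode (0, 0)"
| "enc S = prod_encode (1, 0)"
| "enc (Proj i) = prod_encode (2, i)"
| "enc (Comp f gs) = prod_encode (3, prod_encode (enc f, list_encode (map enc gs)))"
| "enc (Prim f g) = prod_encode (4, prod_encode (enc f, enc g))"
| "enc (Mu f) = prod_encode (5, enc f)"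

text \<open>The standard numbering of c.e. sets: W i is the domain of the unary partial
  recursive function with code i (empty if i is not a code).\<close>

definition W :: "nat \<Rightarrow> nat set" where
  "W i = {x. \<exists>f y. enc f = i \<and> eval f [x] y}"

text \<open>Canonical index of finite sets: d codes the set {x. bit x of d is set}.\<close>

definition canon :: "nat \<Rightarrow> nat set" where
  "canon d = {x. odd (d div 2 ^ x)}"

text \<open>The i-th enumeration operator: the c.e. set W i regarded as a set of axioms
  \<langle>n, D\<rangle> = prod_encode (n, canonical index of D).\<close>

definition Gamma :: "nat \<Rightarrow> nat set \<Rightarrow> nat set" where
  "Gamma i X = {n. \<exists>d. prod_encode (n, d) \<in> W i \<and> canon d \<subseteq> X}"

definition e_le :: "nat set \<Rightarrow> nat set \<Rightarrow> bool" where
  "e_le A B \<longleftrightarrow> (\<exists>i. A = Gamma i B)"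

definition e_equiv :: "nat set \<Rightarrow> nat set \<Rightarrow> bool" where
  "e_equiv A B \<longleftrightarrow> e_le A B \<and> e_le B A"

definition deg_e :: "nat set \<Rightarrow> nat set set" where
  "deg_e A = {B. e_equiv B A}"

definition join :: "nat set \<Rightarrow> nat set \<Rightarrow> nat set" where
  "join X Y = {2 * n | n. n \<in> X} \<union> {2 * n + 1 | n. n \<in> Y}"

definition e_equiv_via :: "nat set \<Rightarrow> nat set \<Rightarrow> nat \<Rightarrow> bool" where
  "e_equiv_via A B k \<longleftrightarrow> Gamma (fst (prod_decode k)) A = B \<and> Gamma (snd (prod_decode k)) B = A"

definition uniformity_function :: "nat set set \<Rightarrow> (nat set \<Rightarrow> nat set) \<Rightarrow> (nat \<Rightarrow> nat) \<Rightarrow> bool" where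
  "uniformity_function \<X> f u \<longleftrightarrow>
     (\<forall>A\<in>\<X>. \<forall>B\<in>\<X>. \<forall>i j. e_equiv_via A B (prod_encode (i, j))
        \<longrightarrow> e_equiv_via (f A) (f B) (u (prod_encode (i, j))))"

definition uniformly_e_invariant :: "nat set set \<Rightarrow> (nat set \<Rightarrow> nat set) \<Rightarrow> bool" where
  "uniformly_e_invariant \<X> f \<longleftrightarrow> (\<exists>u. uniformity_function \<X> f u)"

end

theory Submission
  imports Defs
begin


inductive_cases evZE: "eval Z xs y"
inductive_cases evSE: "eval S xs y"
inductive_cases evProjE: "eval (Proj i) xs y"
inductive_cases evCompE: "eval (Comp f gs) xs y"
inductive_cases evPrim0E: "eval (Prim f g) (0 # xs) y"
inductive_cases evPrimSE: "eval (Prim f g) (Suc n # xs) y"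
inductive_cases evPrimE: "eval (Prim f g) xs y"
inductive_cases evMuE: "eval (Mu f) xs y"

lemma eval_det: "eval p xs y \<Longrightarrow> eval p xs y' \<Longrightarrow> y = y'"
proof (induction arbitrary: y' rule: eval.induct)
  case (eval_Z xs) then show ?case by (rule evZE) simp
next
  case (eval_S xs) then show ?case by (rule evSE) simp
next
  case (eval_Proj i xs) then show ?case by (rule evProjE) simp
next
  case (eval_Comp xs gs ys f z)
  from eval_Comp.prems obtain ys' where a: "list_all2 (\<lambda>g y. eval g xs y) gs ys'" and b: "eval f ys' y'"
    by (rule evCompE) simp
  have "ys = ys'" using eval_Comp.IH(1) a
  proof (induction gs arbitrary: ys ys')
    case Nil then show ?case by simp
  next
    case (Cons g gs)
    then show ?case by (auto simp: list_all2_Cons1)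
  qed
  then show ?case using eval_Comp.IH b by simp
next
  case (eval_Prim0 f xs z g) from eval_Prim0.prems show ?case by (rule evPrim0E) (use eval_Prim0.IH in simp)
next
  case (eval_PrimS f g n xs y z) 
  from eval_PrimS.prems show ?case
    by (rule evPrimSE) (use eval_PrimS.IH in fastforce)
next
  case (eval_Mu f n xs)
  from eval_Mu.prems obtain n' where n': "y' = n'" "eval f (n' # xs) 0" "\<forall>m<n'. \<exists>y>0. eval f (m # xs) y"
    by (rule evMuE) simp
  show ?case
  proof (rule ccontr)
    assume "n \<noteq> y'"
    then consider "n < n'" | "n' < n" using n' by linarith
    then show False
    proof cases
      case 1 then obtain y where "y > 0" "eval f (n # xs) y" using n' by blast
      then show False using eval_Mu.IH(1) by fastforce
    next
      case 2 then obtain y where "y > 0" "\<forall>y'. eval f (n' # xs) y' \<longrightarrow> y = y'" using eval_Mu.IH(2) by blast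
      then show False using n' by fastforce
    qed
  qed
qed

lemma enc_inj: "enc f = enc g \<Longrightarrow> f = g"
proof (induction f arbitrary: g)
  case (Comp f gs)
  then show ?case
  proof (cases g)
    case (Comp f' gs')
    with Comp.prems have 1: "enc f = enc f'" "map enc gs = map enc gs'" by (auto simp: list_encode_eq)
    moreover have "gs = gs'" using 1(2) Comp.IH(2)
    proof (induction gs arbitrary: gs')
      case (Cons a gs) then show ?case by (cases gs') auto
    qed simp
    ultimately show ?thesis using Comp.IH(1) \<open>g = Comp f' gs'\<close> by auto
  qed auto
next
  case Z then show ?case by (cases g) auto
next
  case S then show ?case by (cases g) auto
next
  case (Proj i) then show ?case by (cases g) auto
next
  case (Prim f1 f2) then show ?case by (cases g) auto
next
  case (Mu f) then show ?case by (cases g) auto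
qed


definition computes :: "recf \<Rightarrow> (nat list \<Rightarrow> nat) \<Rightarrow> bool" where
  "computes p F \<longleftrightarrow> (\<forall>xs. eval p xs (F xs))"

lemma arg_simps[simp]: "arg (x#xs) 0 = x" "arg (x#xs) (Suc i) = arg xs i" "arg (x#xs) 1 = arg xs 0"
  "arg (x#xs) 2 = arg xs 1" "arg [] i = 0"
  by (auto simp: arg_def numeral_2_eq_2)

lemma computes_eval: "computes p F \<Longrightarrow> eval p xs y \<longleftrightarrow> y = F xs"
  unfolding computes_def using eval_det by blast

lemma cZ: "computes Z (\<lambda>_. 0)" by (simp add: computes_def eval.intros)
lemma cS: "computes S (\<lambda>xs. Suc (arg xs 0))" by (simp add: computes_def eval.intros)
lemma cProj: "computes (Proj i) (\<lambda>xs. arg xs i)" by (simp add: computes_def eval.intros)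

lemma cC1: "computes f F \<Longrightarrow> computes g G \<Longrightarrow> computes (Comp f [g]) (\<lambda>xs. F [G xs])"
  unfolding computes_def by (auto intro: eval_Comp)
lemma cC2: "computes f F \<Longrightarrow> computes g G \<Longrightarrow> computes g2 G2 \<Longrightarrow> computes (Comp f [g, g2]) (\<lambda>xs. F [G xs, G2 xs])"
  unfolding computes_def by (metis eval_Comp list_all2_Cons list_all2_Nil)

primrec pr :: "(nat list \<Rightarrow> nat) \<Rightarrow> (nat list \<Rightarrow> nat) \<Rightarrow> nat \<Rightarrow> nat list \<Rightarrow> nat" where
  "pr F G 0 xs = F xs"
| "pr F G (Suc n) xs = G (n # pr F G n xs # xs)"

lemma ePrim: "computes f F \<Longrightarrow> computes g G \<Longrightarrow> eval (Prim f g) (n # xs) (pr F G n xs)"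
  by (induction n) (auto simp: computes_def intro: eval.intros)

lemma cP1: "computes f F \<Longrightarrow> computes g G \<Longrightarrow> computes g0 G0 \<Longrightarrow>
   computes (Comp (Prim f g) [g0]) (\<lambda>xs. pr F G (G0 xs) [])"
  unfolding computes_def by (auto intro!: eval_Comp ePrim[unfolded computes_def])
lemma cP2: "computes f F \<Longrightarrow> computes g G \<Longrightarrow> computes g0 G0 \<Longrightarrow> computes g1 G1 \<Longrightarrow>
   computes (Comp (Prim f g) [g0, g1]) (\<lambda>xs. pr F G (G0 xs) [G1 xs])"
  unfolding computes_def by (auto intro!: eval_Comp ePrim[unfolded computes_def])

lemma ccong: "computes p F \<Longrightarrow> (\<And>xs. F xs = H xs) \<Longrightarrow> computes p H"
  unfolding computes_def by metis

lemma evMu: "computes t T \<Longrightarrow> eval (Mu t) xs n \<longleftrightarrow> T (n # xs) = 0 \<and> (\<forall>m<n. T (m # xs) \<noteq> 0)"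
proof
  assume c: "computes t T"
  { assume "eval (Mu t) xs n" then show "T (n # xs) = 0 \<and> (\<forall>m<n. T (m # xs) \<noteq> 0)"
      by (rule evMuE) (use c computes_eval in fastforce) }
  { assume "T (n # xs) = 0 \<and> (\<forall>m<n. T (m # xs) \<noteq> 0)"
    then show "eval (Mu t) xs n" using c unfolding computes_def
      by (intro eval_Mu) (metis, metis neq0_conv) }
qed

lemma cMu: "computes t T \<Longrightarrow> (\<And>xs. T (F xs # xs) = 0 \<and> (\<forall>m<F xs. T (m # xs) \<noteq> 0)) \<Longrightarrow> computes (Mu t) F"
  using evMu unfolding computes_def by blast

definition "ADD = Comp (Prim (Proj 0) (Comp S [Proj 1])) [Proj 0, Proj 1]"
lemma cADD: "computes ADD (\<lambda>xs. arg xs 0 + arg xs 1)"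
proof -
  have "pr (\<lambda>xs. arg xs 0) (\<lambda>xs. Suc (arg [arg xs 1] 0)) n [b] = n + b" for n b by (induction n) auto
  then show ?thesis unfolding ADD_def by (intro ccong[OF cP2[OF cProj cC1[OF cS cProj] cProj cProj]]) simp
qed


lemma c1: "computes (Comp S [Z]) (\<lambda>xs. 1)"
  by (rule ccong[OF cC1[OF cS cZ]]) simp

definition "PRED = Comp (Prim Z (Proj 0)) [Proj 0]"
lemma cPRED: "computes PRED (\<lambda>xs. arg xs 0 - 1)"
proof -
  have "pr (\<lambda>_. 0) (\<lambda>xs. arg xs 0) n [] = n - 1" for n by (induction n) auto
  then show ?thesis unfolding PRED_def by (intro ccong[OF cP1[OF cZ cProj cProj]]) simp
qed

definition "SUB = Comp (Prim (Proj 0) (Comp PRED [Proj 1])) [Proj 1, Proj 0]"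
lemma cSUB: "computes SUB (\<lambda>xs. arg xs 0 - arg xs 1)"
proof -
  have "pr (\<lambda>xs. arg xs 0) (\<lambda>xs. arg [arg xs 1] 0 - 1) n [a] = a - n" for n a by (induction n) auto
  then show ?thesis unfolding SUB_def by (intro ccong[OF cP2[OF cProj cC1[OF cPRED cProj] cProj cProj]]) simp
qed

definition "MUL = Comp (Prim Z (Comp ADD [Proj 1, Proj 2])) [Proj 0, Proj 1]"
lemma cMUL: "computes MUL (\<lambda>xs. arg xs 0 * arg xs 1)"
proof -
  have "pr (\<lambda>_. 0) (\<lambda>xs. arg [arg xs 1, arg xs 2] 0 + arg [arg xs 1, arg xs 2] 1) n [b] = n * b" for n b by (induction n) auto
  then show ?thesis unfolding MUL_def by (intro ccong[OF cP2[OF cZ cC2[OF cADD cProj cProj] cProj cProj]]) simp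
qed

definition "NEQ = Comp ADD [SUB, Comp SUB [Proj 1, Proj 0]]"
lemma cNEQ: "computes NEQ (\<lambda>xs. (arg xs 0 - arg xs 1) + (arg xs 1 - arg xs 0))"
  unfolding NEQ_def by (intro ccong[OF cC2[OF cADD cSUB cC2[OF cSUB cProj cProj]]]) simp

definition "TRI = Comp (Prim Z (Comp ADD [Proj 1, Comp S [Proj 0]])) [Proj 0]"
lemma cTRI: "computes TRI (\<lambda>xs. triangle (arg xs 0))"
proof -
  have "pr (\<lambda>_. 0) (\<lambda>xs. arg [arg xs 1, Suc (arg [arg xs 0] 0)] 0 + arg [arg xs 1, Suc (arg [arg xs 0] 0)] 1) n [] = triangle n" for n by (induction n) auto
  then show ?thesis unfolding TRI_def by (intro ccong[OF cP1[OF cZ cC2[OF cADD cProj cC1[OF cS cProj]] cProj]]) simp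
qed

definition "ENC = Comp ADD [Comp TRI [ADD], Proj 0]"
lemma cENC: "computes ENC (\<lambda>xs. prod_encode (arg xs 0, arg xs 1))"
  unfolding ENC_def by (intro ccong[OF cC2[OF cADD cC1[OF cTRI cADD] cProj]]) (simp add: prod_encode_def)

definition "DS = Mu (Comp SUB [Proj 1, Comp ADD [Comp TRI [Proj 0], Proj 0]])"

lemma tri_mono: "a \<le> b \<Longrightarrow> triangle a \<le> triangle b"
  by (induction b) (auto simp: le_Suc_eq)

lemma cDS: "computes DS (\<lambda>xs. fst (prod_decode (arg xs 0)) + snd (prod_decode (arg xs 0)))"
proof -
  have c: "computes (Comp SUB [Proj 1, Comp ADD [Comp TRI [Proj 0], Proj 0]]) (\<lambda>xs. arg xs 1 - (triangle (arg xs 0) + arg xs 0))"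
    by (intro ccong[OF cC2[OF cSUB cProj cC2[OF cADD cC1[OF cTRI cProj] cProj]]]) simp
  have key: "z - (triangle (fst (prod_decode z) + snd (prod_decode z)) + (fst (prod_decode z) + snd (prod_decode z))) = 0
     \<and> (\<forall>s < fst (prod_decode z) + snd (prod_decode z). z - (triangle s + s) \<noteq> 0)" for z
  proof -
    obtain m n where mn: "prod_decode z = (m, n)" by fastforce
    then have "z = prod_encode (m, n)" by (metis prod_decode_inverse)
    then have z: "z = triangle (m+n) + m" by (simp add: prod_encode_def)
    have "z - (triangle s + s) \<noteq> 0" if "s < m + n" for s
    proof -
      have "triangle s + s < triangle (Suc s)" by simp
      also have "\<dots> \<le> triangle (m+n)" using that by (intro tri_mono) simp
      finally show ?thesis using z by simp
    qed
    then show ?thesis using z mn by simp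
  qed
  show ?thesis unfolding DS_def by (rule cMu[OF c]) (use key in simp)
qed

definition "FST = Comp SUB [Proj 0, Comp TRI [DS]]"
lemma cFST: "computes FST (\<lambda>xs. fst (prod_decode (arg xs 0)))"
proof -
  have "z - triangle (fst (prod_decode z) + snd (prod_decode z)) = fst (prod_decode z)" for z
  proof -
    obtain m n where mn: "prod_decode z = (m, n)" by fastforce
    then have "z = prod_encode (m, n)" by (metis prod_decode_inverse)
    then have z: "z = triangle (m+n) + m" by (simp add: prod_encode_def)
    then show ?thesis using mn by simp
  qed
  then show ?thesis unfolding FST_def by (intro ccong[OF cC2[OF cSUB cProj cC1[OF cTRI cDS]]]) simp
qed

definition "SND = Comp SUB [DS, FST]"
lemma cSND: "computes SND (\<lambda>xs. snd (prod_decode (arg xs 0)))"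
  unfolding SND_def by (intro ccong[OF cC2[OF cSUB cDS cFST]]) simp

definition "PAR = Comp (Prim Z (Comp SUB [Comp S [Z], Proj 1])) [Proj 0]"
lemma cPAR: "computes PAR (\<lambda>xs. arg xs 0 mod 2)"
proof -
  have "pr (\<lambda>_. 0) (\<lambda>xs. 1 - arg xs 1) n [] = n mod 2" for n by (induction n) (auto simp: mod_Suc)
  then show ?thesis unfolding PAR_def by (intro ccong[OF cP1[OF cZ ccong[OF cC2[OF cSUB c1 cProj]] cProj]]) simp_all
qed

definition "HALF = Comp (Prim Z (Comp ADD [Proj 1, Comp PAR [Proj 0]])) [Proj 0]"
lemma cHALF: "computes HALF (\<lambda>xs. arg xs 0 div 2)"
proof -
  have "pr (\<lambda>_. 0) (\<lambda>xs. arg xs 1 + arg xs 0 mod 2) n [] = n div 2" for n by (induction n) (auto simp: div_Suc mod_Suc)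
  then show ?thesis unfolding HALF_def by (intro ccong[OF cP1[OF cZ ccong[OF cC2[OF cADD cProj cC1[OF cPAR cProj]]] cProj]]) simp_all
qed

definition "POW2 = Comp (Prim (Comp S [Z]) (Comp ADD [Proj 1, Proj 1])) [Proj 0]"
lemma cPOW2: "computes POW2 (\<lambda>xs. 2 ^ arg xs 0)"
proof -
  have "pr (\<lambda>_. 1) (\<lambda>xs. arg xs 1 + arg xs 1) n [] = 2 ^ n" for n by (induction n) auto
  then show ?thesis unfolding POW2_def by (intro ccong[OF cP1[OF c1 ccong[OF cC2[OF cADD cProj cProj]] cProj]]) simp_all
qed

definition "SHR = Comp (Prim (Proj 0) (Comp HALF [Proj 1])) [Proj 1, Proj 0]"
lemma cSHR: "computes SHR (\<lambda>xs. arg xs 0 div 2 ^ arg xs 1)"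
proof -
  have "pr (\<lambda>xs. arg xs 0) (\<lambda>xs. arg xs 1 div 2) n [d] = d div 2 ^ n" for n d by (induction n) (simp_all del: power_Suc add: power_Suc2 div_mult2_eq)
  then show ?thesis unfolding SHR_def by (intro ccong[OF cP2[OF cProj ccong[OF cC1[OF cHALF cProj]] cProj cProj]]) simp_all
qed

definition "STEP = Comp ADD [Proj 1, Comp MUL [Comp PAR [Comp SHR [Proj 2, Comp S [Comp ADD [Proj 0, Proj 0]]]], Comp POW2 [Proj 0]]]"
lemma cSTEP: "computes STEP (\<lambda>xs. arg xs 1 + (arg xs 2 div 2 ^ (2 * arg xs 0 + 1) mod 2) * 2 ^ arg xs 0)"
  unfolding STEP_def
  by (intro ccong[OF cC2[OF cADD cProj cC2[OF cMUL cC1[OF cPAR cC2[OF cSHR cProj cC1[OF cS cC2[OF cADD cProj cProj]]]] cC1[OF cPOW2 cProj]]]]) 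
     (simp add: mult_2)

definition hfun :: "nat \<Rightarrow> nat" where
  "hfun d = (\<Sum>i<d. (d div 2 ^ (2 * i + 1) mod 2) * 2 ^ i)"

definition "HH = Comp (Prim Z STEP) [Proj 0, Proj 0]"
lemma cHH: "computes HH (\<lambda>xs. hfun (arg xs 0))"
proof -
  have "pr (\<lambda>_. 0) (\<lambda>xs. arg xs 1 + (arg xs 2 div 2 ^ (2 * arg xs 0 + 1) mod 2) * 2 ^ arg xs 0) n [d] =
     (\<Sum>i<n. (d div 2 ^ (2 * i + 1) mod 2) * 2 ^ i)" for n d by (induction n) auto
  then show ?thesis unfolding HH_def hfun_def by (intro ccong[OF cP2[OF cZ cSTEP cProj cProj]]) simp_all
qed


definition domp :: "recf \<Rightarrow> nat set" where "domp P = {x. \<exists>y. eval P [x] y}"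

lemma evComp: "eval (Comp f gs) xs z \<longleftrightarrow> (\<exists>ys. list_all2 (\<lambda>g y. eval g xs y) gs ys \<and> eval f ys z)"
  by (rule iffI, erule evCompE, blast, blast intro: eval_Comp)

lemma evComp1: "eval (Comp f [g]) xs z \<longleftrightarrow> (\<exists>y. eval g xs y \<and> eval f [y] z)"
  by (auto simp add: evComp list_all2_Cons1)

lemma evComp2: "eval (Comp f [g, g2]) xs z \<longleftrightarrow> (\<exists>y y2. eval g xs y \<and> eval g2 xs y2 \<and> eval f [y, y2] z)"
  by (auto simp add: evComp list_all2_Cons1)

lemma W_enc: "W (enc P) = domp P"
  unfolding W_def domp_def using enc_inj by blast

lemma W_any: "\<exists>P. W k = domp P"
proof (cases "\<exists>f. enc f = k")
  case True then show ?thesis using W_enc by blast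
next
  case False
  have "domp (Mu S) = {}" unfolding domp_def by (auto elim!: evMuE evSE)
  then show ?thesis using False unfolding W_def by auto
qed

lemma domMu: "computes t T \<Longrightarrow> (\<exists>n. eval (Mu t) xs n) \<longleftrightarrow> (\<exists>n. T (n # xs) = 0)"
proof
  assume c: "computes t T"
  { assume "\<exists>n. eval (Mu t) xs n" then show "\<exists>n. T (n # xs) = 0" using evMu[OF c] by blast }
  { assume "\<exists>n. T (n # xs) = 0"
    then have "T ((LEAST n. T (n # xs) = 0) # xs) = 0 \<and> (\<forall>m<(LEAST n. T (n # xs) = 0). T (m # xs) \<noteq> 0)"
      by (meson LeastI_ex not_less_Least)
    then show "\<exists>n. eval (Mu t) xs n" using evMu[OF c] by blast }
qed

lemma canon_eq: "canon = set_decode"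
  by (rule ext) (simp add: canon_def set_decode_def)

lemma sd_pow: "set_decode (2 ^ n) = {n}"
  using set_decode_plus_power_2[of n 0] by simp

definition "PA = Mu (Comp NEQ [Proj 1, Comp ENC [Comp S [Comp ADD [Proj 0, Proj 0]], Comp POW2 [Proj 0]]])"
definition "PB = Mu (Comp NEQ [Proj 1, Comp ENC [Proj 0, Comp POW2 [Comp S [Comp ADD [Proj 0, Proj 0]]]]])"

lemma domPA: "domp PA = {prod_encode (2*n+1, 2^n) | n. True}"
proof -
  have c: "computes (Comp NEQ [Proj 1, Comp ENC [Comp S [Comp ADD [Proj 0, Proj 0]], Comp POW2 [Proj 0]]])
    (\<lambda>xs. (arg xs 1 - prod_encode (2 * arg xs 0 + 1, 2 ^ arg xs 0)) + (prod_encode (2 * arg xs 0 + 1, 2 ^ arg xs 0) - arg xs 1))"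
    by (intro ccong[OF cC2[OF cNEQ cProj cC2[OF cENC cC1[OF cS cC2[OF cADD cProj cProj]] cC1[OF cPOW2 cProj]]]]) (simp add: mult_2)
  show ?thesis unfolding domp_def PA_def using domMu[OF c] by auto
qed

lemma domPB: "domp PB = {prod_encode (n, 2^(2*n+1)) | n. True}"
proof -
  have c: "computes (Comp NEQ [Proj 1, Comp ENC [Proj 0, Comp POW2 [Comp S [Comp ADD [Proj 0, Proj 0]]]]])
    (\<lambda>xs. (arg xs 1 - prod_encode (arg xs 0, 2 ^ (2 * arg xs 0 + 1))) + (prod_encode (arg xs 0, 2 ^ (2 * arg xs 0 + 1)) - arg xs 1))"
    by (intro ccong[OF cC2[OF cNEQ cProj cC2[OF cENC cProj cC1[OF cPOW2 cC1[OF cS cC2[OF cADD cProj cProj]]]]]]) (simp add: mult_2)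
  show ?thesis unfolding domp_def PB_def using domMu[OF c] by auto
qed

lemma sd_pow2: "set_decode (2 * 2 ^ (2 * n)) = {Suc (2 * n)}"
  using sd_pow[of "Suc (2*n)"] by simp

lemma GammaA: "Gamma (enc PA) X = join {} X"
  unfolding Gamma_def W_enc domPA join_def canon_eq by (auto simp: sd_pow)

lemma GammaB: "Gamma (enc PB) (join {} X) = X"
  unfolding Gamma_def W_enc domPB join_def canon_eq by (auto simp: sd_pow sd_pow2)


lemma mod2_if: "(a::nat) mod 2 = (if odd a then 1 else 0)"
  by (simp add: odd_iff_mod_2_eq_one even_iff_mod_2_eq_zero)

lemma hfun_sd: "set_decode (hfun d) = {m. 2*m+1 \<in> set_decode d}"
proof -
  let ?F = "{m. 2*m+1 \<in> set_decode d}"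
  have sub: "?F \<subseteq> {..<d}"
  proof
    fix m assume "m \<in> ?F"
    then have "odd (d div 2 ^ (2*m+1))" by (simp add: set_decode_def)
    then have "d div 2 ^ (2*m+1) \<noteq> 0" by (metis even_zero)
    then have "2 ^ (2*m+1) \<le> d" by (simp add: div_eq_0_iff not_less)
    moreover have "m < 2 ^ m" by (rule less_exp)
    moreover have "(2::nat) ^ m \<le> 2 ^ (2*m+1)" by (intro power_increasing) auto
    ultimately have "m < d" by linarith
    then show "m \<in> {..<d}" by simp
  qed
  have "hfun d = (\<Sum>i<d. if i \<in> ?F then 2 ^ i else 0)"
    unfolding hfun_def by (intro sum.cong refl) (simp add: mod2_if set_decode_def)
  also have "\<dots> = (\<Sum>i\<in>?F. 2 ^ i)"
    using sum.inter_restrict[of "{..<d}" "\<lambda>i. (2::nat)^i" ?F] sub by (simp add: Int_absorb1 inf.absorb2)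
  also have "\<dots> = set_encode ?F" by (simp add: set_encode_def)
  finally show ?thesis using sub finite_subset by (metis finite_lessThan set_encode_inverse)
qed

lemma hfun_spread: "hfun (set_encode ((\<lambda>m. 2*m+1) ` set_decode e)) = e"
proof -
  have "set_decode (hfun (set_encode ((\<lambda>m. 2*m+1) ` set_decode e))) = set_decode e"
    by (auto simp add: hfun_sd)
  then show ?thesis by (metis set_decode_inverse)
qed

definition "QH = Mu (Comp NEQ [Comp FST [Proj 1], Comp S [Comp ADD [Proj 0, Proj 0]]])"

lemma evQH: "eval QH [x] q \<longleftrightarrow> fst (prod_decode x) = 2*q+1"
proof -
  have c: "computes (Comp NEQ [Comp FST [Proj 1], Comp S [Comp ADD [Proj 0, Proj 0]]])
     (\<lambda>xs. (fst (prod_decode (arg xs 1)) - (2 * arg xs 0 + 1)) + ((2 * arg xs 0 + 1) - fst (prod_decode (arg xs 1))))"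
    by (intro ccong[OF cC2[OF cNEQ cC1[OF cFST cProj] cC1[OF cS cC2[OF cADD cProj cProj]]]]) (simp add: mult_2)
  show ?thesis unfolding QH_def evMu[OF c] by auto
qed

lemma le_join: assumes "C = Gamma k A" shows "\<exists>i. join {} C = Gamma i A"
proof -
  obtain P where P: "W k = domp P" using W_any by blast
  define I where "I = Comp P [Comp ENC [QH, SND]]"
  have dI: "x \<in> domp I \<longleftrightarrow> (\<exists>q. fst (prod_decode x) = 2*q+1 \<and> prod_encode (q, snd (prod_decode x)) \<in> W k)" for x
    unfolding I_def domp_def P
    by (auto simp: evComp1 evComp2 evQH computes_eval[OF cSND] computes_eval[OF cENC]) blast
  have "Gamma (enc I) A = join {} C"
    unfolding Gamma_def W_enc assms join_def by (auto simp: dI)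
  then show ?thesis by metis
qed

lemma ge_join: assumes "A = Gamma l C" shows "\<exists>j. A = Gamma j (join {} C)"
proof -
  obtain P where P: "W l = domp P" using W_any by blast
  define J where "J = Comp P [Comp ENC [FST, Comp HH [SND]]]"
  have dJ: "x \<in> domp J \<longleftrightarrow> prod_encode (fst (prod_decode x), hfun (snd (prod_decode x))) \<in> W l" for x
    unfolding J_def domp_def P
    by (auto simp: evComp1 evComp2 computes_eval[OF cFST] computes_eval[OF cSND] computes_eval[OF cENC] computes_eval[OF cHH])
  have "Gamma (enc J) (join {} C) = A"
  proof
    show "Gamma (enc J) (join {} C) \<subseteq> A"
    proof
      fix n assume "n \<in> Gamma (enc J) (join {} C)"
      then obtain d where d: "prod_encode (n, hfun d) \<in> W l" "set_decode d \<subseteq> join {} C"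
        unfolding Gamma_def W_enc dJ canon_eq by auto
      have "set_decode (hfun d) \<subseteq> C"
      proof
        fix m assume "m \<in> set_decode (hfun d)"
        then have "2*m+1 \<in> set_decode d" by (simp only: hfun_sd mem_Collect_eq)
        then have "2*m+1 \<in> join {} C" using d(2) by blast
        then show "m \<in> C" unfolding join_def by auto
      qed
      then show "n \<in> A" using d(1) unfolding assms Gamma_def canon_eq by auto
    qed
  next
    show "A \<subseteq> Gamma (enc J) (join {} C)"
    proof
      fix n assume "n \<in> A"
      then obtain e where e: "prod_encode (n, e) \<in> W l" "set_decode e \<subseteq> C"
        unfolding assms Gamma_def canon_eq by auto
      define d where "d = set_encode ((\<lambda>m. 2*m+1) ` set_decode e)"
      have "set_decode d = (\<lambda>m. 2*m+1) ` set_decode e" unfolding d_def by simp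
      then have "set_decode d \<subseteq> join {} C" using e(2) unfolding join_def by auto
      moreover have "hfun d = e" unfolding d_def by (rule hfun_spread)
      ultimately show "n \<in> Gamma (enc J) (join {} C)"
        unfolding Gamma_def W_enc dJ canon_eq using e(1) by auto
    qed
  qed
  then show ?thesis by metis
qed

lemma join_deg: assumes "C \<in> deg_e A" shows "join {} C \<in> deg_e A"
proof -
  from assms obtain k l where "C = Gamma k A" "A = Gamma l C"
    unfolding deg_e_def e_equiv_def e_le_def by auto
  then show ?thesis using le_join ge_join unfolding deg_e_def e_equiv_def e_le_def by blast
qed

lemma via_join: "e_equiv_via C (join {} C) (prod_encode (enc PA, enc PB))"
  unfolding e_equiv_via_def by (simp add: GammaA GammaB)

theorem lemma5p3:
  fixes A :: "nat set" and f :: "nat set \<Rightarrow> nat set"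
  assumes "uniformly_e_invariant (deg_e A) f"
    and "\<exists>C\<in>deg_e A. \<exists>D\<in>deg_e A. f C \<noteq> f D"
  shows "\<exists>B\<in>deg_e A. f (join A B) \<noteq> f (join A {}) \<or> f (join A B) \<noteq> f (join {} B)"
proof (rule ccontr)
  assume H: "\<not> ?thesis"
  obtain u where u: "uniformity_function (deg_e A) f u" using assms(1) unfolding uniformly_e_invariant_def by blast
  obtain C D where CD: "C \<in> deg_e A" "D \<in> deg_e A" "f C \<noteq> f D" using assms(2) by blast
  have k: "f X = Gamma (snd (prod_decode (u (prod_encode (enc PA, enc PB))))) (f (join A {}))" if X: "X \<in> deg_e A" for X
  proof -
    have "e_equiv_via (f X) (f (join {} X)) (u (prod_encode (enc PA, enc PB)))"
      using u join_deg[OF X] X via_join unfolding uniformity_function_def by blast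
    moreover have "f (join {} X) = f (join A {})" using H X by auto
    ultimately show ?thesis unfolding e_equiv_via_def by simp
  qed
  show False using k[OF CD(1)] k[OF CD(2)] CD(3) by simp
qed

end
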